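(* Let $A\subset\mathbb R$ be an open interval of length strictly larger than $2$, let $\psi:A\to\mathbb C$ be a regular $\mathbb C$-supershift on $A$, and let $a_0\in A$. Then the function $a\in A\mapsto\int_{a_0}^a\psi(\alpha)\,d\alpha$ is a regular $\mathbb C$-supershift on $A$.
   Context: For an open interval $A\subset\mathbb R$ of length $R>2$ (possibly infinite), set $\mathbb A=\{(a,a')\in\mathbb R\times A:\ a'+[-1,1]\subset A,\ a+a'\in A\}$. For a sequence $\boldsymbol\epsilon=(\epsilon_N)_{N\ge1}$ with $\epsilon_N\in[0,1)$ and $\epsilon_N\to0$, put $h^{\boldsymbol\epsilon}_{N,\nu}=1-2\,\frac{\nu+\epsilon_N(N-\nu)}{N}$ for $0\le\nu\le N$. For a continuous $\psi:A\to\mathbb C$ and $(a,a')\in\mathbb A$ set $$S_N^{\boldsymbol\epsilon}[\psi](a,a')=\sum_{\nu=0}^N\binom N\nu\Big(\frac{1+a}2\Big)^{N-\nu}\Big(\frac{1-a}2\Big)^{\nu}\psi\big(a'+h^{\boldsymbol\epsilon}_{N,\nu}\big).$$ A continuous $\psi:A\to\mathbb C$ is called a regular $\mathbb C$-supershift on $A$ if (1) for every such sequence $\boldsymbol\epsilon$, $S_N^{\boldsymbol\epsilon}[\psi](a,a')\to\psi(a+a')$ as $N\to\infty$ uniformly on compact subsets of $\mathbb A$; and (2) for every family $\{\boldsymbol\epsilon_{\iota'}=(\epsilon_{\iota',N})_{N\ge1}:\iota'\in I'\}$ of such sequences with $\sup_{\iota'\in I'}\epsilon_{\iota',N}\to0$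 as $N\to\infty$, the convergence in (1) is uniform with respect to $\iota'\in I'$ on each compact subset of $\mathbb A$. *)

theory Defs
  imports "HOL-Analysis.Analysis" "HOL-Probability.Probability"
begin

text \<open>An open interval of \<real> of length strictly larger than 2 (possibly unbounded).
  The length sup A - inf A exceeds 2 iff A contains two points at distance > 2.\<close>
definition open_interval_gt2 :: "real set \<Rightarrow> bool" where
  "open_interval_gt2 A \<longleftrightarrow> open A \<and> is_interval A \<and> (\<exists>x\<in>A. \<exists>y\<in>A. y - x > 2)"

definition AA :: "real set \<Rightarrow> (real \<times> real) set" where
  "AA A = {(a, a'). a' \<in> A \<and> {a' - 1 .. a' + 1} \<subseteq> A \<and> a + a' \<in> A}"

definition admissible_seq :: "(nat \<Rightarrow> real) \<Rightarrow> bool" where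
  "admissible_seq eps \<longleftrightarrow> (\<forall>N\<ge>1. 0 \<le> eps N \<and> eps N < 1) \<and> eps \<longlonglongrightarrow> 0"

definition hseq :: "(nat \<Rightarrow> real) \<Rightarrow> nat \<Rightarrow> nat \<Rightarrow> real" where
  "hseq eps N \<nu> = 1 - 2 * ((real \<nu> + eps N * (real N - real \<nu>)) / real N)"

definition SN :: "(nat \<Rightarrow> real) \<Rightarrow> (real \<Rightarrow> complex) \<Rightarrow> nat \<Rightarrow> real \<times> real \<Rightarrow> complex" where
  "SN eps \<psi> N p = (\<Sum>\<nu>=0..N. of_real (real (N choose \<nu>) * ((1 + fst p) / 2) ^ (N - \<nu>)
        * ((1 - fst p) / 2) ^ \<nu>) * \<psi> (snd p + hseq eps N \<nu>))"

text \<open>Regular C-supershift. A family of sequences indexed by I' is represented by its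
  image set E (uniformity w.r.t. the index is the same as uniformity over E).\<close>
definition regular_supershift :: "real set \<Rightarrow> (real \<Rightarrow> complex) \<Rightarrow> bool" where
  "regular_supershift A \<psi> \<longleftrightarrow> continuous_on A \<psi> \<and>
     (\<forall>eps. admissible_seq eps \<longrightarrow>
        (\<forall>K. compact K \<and> K \<subseteq> AA A \<longrightarrow>
           uniform_limit K (\<lambda>N p. SN eps \<psi> N p) (\<lambda>p. \<psi> (fst p + snd p)) sequentially)) \<and>
     (\<forall>E. (\<forall>eps\<in>E. admissible_seq eps) \<and> (\<lambda>N. SUP eps\<in>E. eps N) \<longlonglongrightarrow> 0 \<longrightarrow>
        (\<forall>K. compact K \<and> K \<subseteq> AA A \<longrightarrow>
           uniform_limit (E \<times> K) (\<lambda>N q. SN (fst q) \<psi> N (snd q))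
              (\<lambda>q. \<psi> (fst (snd q) + snd (snd q))) sequentially))"

end

theory Submission
  imports Defs begin

lemma hseq_range:
  assumes "1 \<le> N" "0 \<le> eps N" "eps N \<le> 1" "\<nu> \<le> N"
  shows "-1 \<le> hseq eps N \<nu> \<and> hseq eps N \<nu> \<le> 1"
proof -
  have N: "real N > 0" using assms by simp
  have "real \<nu> + eps N * (real N - real \<nu>) \<le> real N"
  proof -
    have "eps N * (real N - real \<nu>) \<le> 1 * (real N - real \<nu>)"
      using assms by (intro mult_right_mono) auto
    then show ?thesis by simp
  qed
  moreover have "0 \<le> real \<nu> + eps N * (real N - real \<nu>)"
    using assms by simp
  ultimately show ?thesis using N unfolding hseq_def
    by (auto simp: field_simps)
qed

lemma hseq_step:
  assumes "1 \<le> N"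
  shows "hseq eps N \<nu> = hseq eps N (Suc \<nu>) + 2 * (1 - eps N) / real N"
  using assms unfolding hseq_def by (simp add: field_simps)

lemma hseq_shift:
  assumes "1 \<le> M" "d M = eps (Suc M) + (1 - eps (Suc M)) / real (Suc M)"
  shows "hseq d M \<nu> = hseq eps (Suc M) (Suc \<nu>)"
proof -
  have M: "real M > 0" using assms by simp
  have key: "(n + (e + (1-e)/(m+1))*(m-n))/m = (n+1 + e*(m-n))/(m+1)" if "m > 0" for n e m :: real
  proof -
    have "m + 1 > 0" "m \<noteq> 0" "m + 1 \<noteq> 0" using that by auto
    then show ?thesis by (simp add: divide_simps) (simp add: algebra_simps)
  qed
  show ?thesis using key[OF M, of "real \<nu>" "eps (Suc M)"] unfolding hseq_def assms(2)
    by (simp add: algebra_simps)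
qed


definition bern :: "nat \<Rightarrow> real \<Rightarrow> nat \<Rightarrow> real" where
  "bern M t \<nu> = real (M choose \<nu>) * ((1 + t) / 2) ^ (M - \<nu>) * ((1 - t) / 2) ^ \<nu>"

lemma bern_deriv:
  "((\<lambda>t. bern (Suc M) t \<nu>) has_real_derivative
     (real (Suc M) / 2 * (bern M t \<nu> - (if \<nu> = 0 then 0 else bern M t (\<nu> - 1))))) (at t)"
proof (cases \<nu>)
  case 0
  show ?thesis unfolding 0 bern_def
    apply (rule derivative_eq_intros refl | simp)+
    done
next
  case (Suc k)
  have i1: "real (Suc M choose Suc k) * real (Suc k) = real (Suc M) * real (M choose k)"
    by (metis Suc_times_binomial_eq of_nat_mult)
  have i2: "real (Suc M choose Suc k) * real (M - k) = real (Suc M) * real (M choose Suc k)"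
    using binomial_absorb_comp[of "Suc M" "Suc k"] by (metis diff_Suc_Suc diff_Suc_1 mult.commute of_nat_mult)
  define p where "p = (1 + t) / 2"
  define q where "q = (1 - t) / 2"
  have D: "((\<lambda>t. bern (Suc M) t \<nu>) has_real_derivative
     real (Suc M choose Suc k) * (real (M - k) * p ^ (M - k - 1) * (1/2) * q ^ Suc k
        + p ^ (M - k) * (real (Suc k) * q ^ k * (- 1/2)))) (at t)"
    unfolding Suc bern_def p_def q_def
    apply (rule derivative_eq_intros refl | simp)+
    apply (simp add: field_simps)
    done
  have "real (Suc M choose Suc k) * (real (M - k) * p ^ (M - k - 1) * (1/2) * q ^ Suc k
        + p ^ (M - k) * (real (Suc k) * q ^ k * (- 1/2)))
      = (real (Suc M choose Suc k) * real (M - k)) * p ^ (M - Suc k) * q ^ Suc k / 2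
        - (real (Suc M choose Suc k) * real (Suc k)) * p ^ (M - k) * q ^ k / 2"
    by (simp add: field_simps del: binomial_Suc_Suc)
  also have "\<dots> = real (Suc M) / 2 * (bern M t \<nu> - (if \<nu> = 0 then 0 else bern M t (\<nu> - 1)))"
    unfolding i1 i2 Suc bern_def p_def q_def by (simp add: field_simps del: binomial_Suc_Suc)
  finally have eq: "real (Suc M choose Suc k) * (real (M - k) * p ^ (M - k - 1) * (1/2) * q ^ Suc k
        + p ^ (M - k) * (real (Suc k) * q ^ k * (- 1/2))) = real (Suc M) / 2 * (bern M t \<nu> - (if \<nu> = 0 then 0 else bern M t (\<nu> - 1)))" .
  show ?thesis using D by (simp only: eq)
qed

lemma bern_Suc_zero: "bern M t (Suc M) = 0"
  unfolding bern_def by simp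

lemma bern_sum_deriv:
  fixes f :: "nat \<Rightarrow> complex"
  shows "((\<lambda>t. \<Sum>\<nu>=0..Suc M. of_real (bern (Suc M) t \<nu>) * f \<nu>) has_vector_derivative
     (of_real (real (Suc M) / 2) * (\<Sum>\<nu>=0..M. of_real (bern M t \<nu>) * (f \<nu> - f (Suc \<nu>))))) (at t)"
proof -
  have D: "((\<lambda>t. \<Sum>\<nu>=0..Suc M. of_real (bern (Suc M) t \<nu>) * f \<nu>) has_vector_derivative
     (\<Sum>\<nu>=0..Suc M. of_real (real (Suc M) / 2 * (bern M t \<nu> - (if \<nu> = 0 then 0 else bern M t (\<nu> - 1)))) * f \<nu>)) (at t)"
    by (intro has_vector_derivative_sum has_vector_derivative_mult_left has_vector_derivative_of_real bern_deriv)
  have "(\<Sum>\<nu>=0..Suc M. of_real (real (Suc M) / 2 * (bern M t \<nu> - (if \<nu> = 0 then 0 else bern M t (\<nu> - 1)))) * f \<nu>)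
      = of_real (real (Suc M) / 2) * ((\<Sum>\<nu>=0..Suc M. of_real (bern M t \<nu>) * f \<nu>)
          - (\<Sum>\<nu>=0..Suc M. of_real (if \<nu> = 0 then 0 else bern M t (\<nu> - 1)) * f \<nu>))"
    by (simp add: sum_distrib_left sum_subtractf algebra_simps)
  also have "(\<Sum>\<nu>=0..Suc M. of_real (bern M t \<nu>) * f \<nu>) = (\<Sum>\<nu>=0..M. of_real (bern M t \<nu>) * f \<nu>)"
    by (simp add: bern_Suc_zero)
  also have "(\<Sum>\<nu>=0..Suc M. of_real (if \<nu> = 0 then 0 else bern M t (\<nu> - 1)) * f \<nu>)
      = (\<Sum>\<nu>=0..M. of_real (bern M t \<nu>) * f (Suc \<nu>))"
    by (subst sum.atLeast_Suc_atMost) (simp_all add: sum.shift_bounds_cl_Suc_ivl del: sum.cl_ivl_Suc)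
  also have "of_real (real (Suc M) / 2) * ((\<Sum>\<nu>=0..M. of_real (bern M t \<nu>) * f \<nu>)
          - (\<Sum>\<nu>=0..M. of_real (bern M t \<nu>) * f (Suc \<nu>)))
     = of_real (real (Suc M) / 2) * (\<Sum>\<nu>=0..M. of_real (bern M t \<nu>) * (f \<nu> - f (Suc \<nu>)))"
    by (simp add: sum_subtractf algebra_simps)
  finally show ?thesis by (rule has_vector_derivative_eq_rhs[OF D])
qed


lemma SN_bern: "SN eps f N p = (\<Sum>\<nu>=0..N. of_real (bern N (fst p) \<nu>) * f (snd p + hseq eps N \<nu>))"
  by (simp add: SN_def bern_def)

lemma mvt_vec:
  fixes W :: "real \<Rightarrow> 'b::real_normed_vector"
  assumes "convex S"
    and "\<And>\<tau>. \<tau> \<in> S \<Longrightarrow> (W has_vector_derivative W' \<tau>) (at \<tau> within S)"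
    and "\<And>\<tau>. \<tau> \<in> S \<Longrightarrow> norm (W' \<tau>) \<le> B"
    and "x \<in> S" "y \<in> S"
  shows "norm (W x - W y) \<le> B * \<bar>x - y\<bar>"
proof -
  have "norm (W x - W y) \<le> B * norm (x - y)"
  proof (rule differentiable_bound[where f' = "\<lambda>\<tau> h. h *\<^sub>R W' \<tau>"])
    show "(W has_derivative (\<lambda>h. h *\<^sub>R W' \<tau>)) (at \<tau> within S)" if "\<tau> \<in> S" for \<tau>
      using assms(2)[OF that] by (simp add: has_vector_derivative_def)
    show "onorm (\<lambda>h. h *\<^sub>R W' \<tau>) \<le> B" if "\<tau> \<in> S" for \<tau>
      using onorm_scaleR_left[OF bounded_linear_ident, of "W' \<tau>"] assms(3)[OF that]
      by (simp add: onorm_id)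
  qed (use assms in simp_all)
  then show ?thesis by simp
qed


lemma AA_iff:
  assumes "is_interval A"
  shows "p \<in> AA A \<longleftrightarrow> snd p - 1 \<in> A \<and> snd p + 1 \<in> A \<and> fst p + snd p \<in> A"
proof
  assume "p \<in> AA A" then show "snd p - 1 \<in> A \<and> snd p + 1 \<in> A \<and> fst p + snd p \<in> A"
    by (auto simp: AA_def)
next
  assume h: "snd p - 1 \<in> A \<and> snd p + 1 \<in> A \<and> fst p + snd p \<in> A"
  have sub: "{snd p - 1 .. snd p + 1} \<subseteq> A"
  proof
    fix y assume "y \<in> {snd p - 1 .. snd p + 1}"
    then show "y \<in> A" using assms h unfolding is_interval_1 by (meson atLeastAtMost_iff)
  qed
  have "snd p \<in> A" using sub by (simp add: subset_iff)
  then show "p \<in> AA A" using h sub unfolding AA_def by (simp add: case_prod_beta)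
qed

lemma open_AA:
  assumes "open A" "is_interval A"
  shows "open (AA A)"
proof -
  have "AA A = (\<lambda>p. snd p - 1) -` A \<inter> (\<lambda>p. snd p + 1) -` A \<inter> (\<lambda>p. fst p + snd p) -` A"
    by (simp add: set_eq_iff AA_iff[OF assms(2)])
  also have "open \<dots>"
    by (intro open_Int open_vimage assms(1) continuous_intros)
  finally show ?thesis .
qed


definition Dsh :: "(nat \<Rightarrow> real) \<Rightarrow> nat \<Rightarrow> real" where
  "Dsh eps M = eps (Suc M) + (1 - eps (Suc M)) / real (Suc M)"

lemma Dsh_bounds:
  assumes "0 \<le> eps (Suc M)" "eps (Suc M) < 1" "1 \<le> M"
  shows "0 \<le> Dsh eps M" "Dsh eps M < 1" "Dsh eps M \<le> eps (Suc M) + 1 / real (Suc M)"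
proof -
  have p: "real (Suc M) > 1" using assms by simp
  have "(1 - eps (Suc M)) / real (Suc M) < 1 - eps (Suc M)"
    using p assms by (simp add: divide_less_eq)
  then show "Dsh eps M < 1" by (simp add: Dsh_def)
  show "0 \<le> Dsh eps M" using assms by (simp add: Dsh_def)
  show "Dsh eps M \<le> eps (Suc M) + 1 / real (Suc M)"
    using assms p by (simp add: Dsh_def divide_right_mono)
qed

lemma Dsh_lim: assumes "eps \<longlonglongrightarrow> 0" shows "Dsh eps \<longlonglongrightarrow> 0"
proof -
  have a: "(\<lambda>M. eps (Suc M)) \<longlonglongrightarrow> 0" using assms by (rule LIMSEQ_Suc)
  have "(\<lambda>M. eps (Suc M) + (1 - eps (Suc M)) * inverse (real (Suc M))) \<longlonglongrightarrow> 0 + (1 - 0) * 0"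
    by (intro tendsto_intros a LIMSEQ_inverse_real_of_nat)
  moreover have "Dsh eps = (\<lambda>M. eps (Suc M) + (1 - eps (Suc M)) * inverse (real (Suc M)))"
    by (simp add: fun_eq_iff Dsh_def divide_inverse)
  ultimately show ?thesis by simp
qed

lemma Dsh_adm: assumes "admissible_seq eps" shows "admissible_seq (Dsh eps)"
  using assms Dsh_bounds[of eps] Dsh_lim[of eps] unfolding admissible_seq_def by auto

lemma Sup_facts:
  assumes "\<forall>e\<in>E. admissible_seq e" "eps \<in> E" "1 \<le> N"
  shows "0 \<le> eps N" "eps N < 1" "eps N \<le> (SUP e\<in>E. e N)"
proof -
  show "0 \<le> eps N" "eps N < 1" using assms unfolding admissible_seq_def by auto
  have "bdd_above ((\<lambda>e. e N) ` E)"
    using assms unfolding admissible_seq_def by (intro bdd_aboveI[where M=1]) (auto intro: less_imp_le)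
  then show "eps N \<le> (SUP e\<in>E. e N)" by (rule cSUP_upper[OF assms(2)])
qed

lemma Dsh_sup:
  assumes E0: "E \<noteq> {}" and adm: "\<forall>e\<in>E. admissible_seq e" and lim: "(\<lambda>N. SUP e\<in>E. e N) \<longlonglongrightarrow> 0"
  shows "(\<lambda>M. SUP d\<in>Dsh ` E. d M) \<longlonglongrightarrow> 0"
proof -
  have eq: "(SUP d\<in>Dsh ` E. d M) = (SUP e\<in>E. Dsh e M)" for M by (simp add: image_image)
  obtain e0 where e0: "e0 \<in> E" using E0 by blast
  have lo: "0 \<le> (SUP e\<in>E. Dsh e M)" if "1 \<le> M" for M
  proof -
    have "bdd_above ((\<lambda>e. Dsh e M) ` E)"
      using Sup_facts[OF adm, of _ "Suc M"] Dsh_bounds[of _ M] that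
      by (intro bdd_aboveI[where M=1]) (auto intro: less_imp_le)
    then have "Dsh e0 M \<le> (SUP e\<in>E. Dsh e M)" by (rule cSUP_upper[OF e0])
    moreover have "0 \<le> Dsh e0 M" using Sup_facts[OF adm e0, of "Suc M"] Dsh_bounds[of e0 M] that by auto
    ultimately show ?thesis by linarith
  qed
  have hi: "(SUP e\<in>E. Dsh e M) \<le> (SUP e\<in>E. e (Suc M)) + inverse (real (Suc M))" if "1 \<le> M" for M
  proof (rule cSUP_least[OF E0])
    fix e assume "e \<in> E"
    then show "Dsh e M \<le> (SUP e\<in>E. e (Suc M)) + inverse (real (Suc M))"
      using Sup_facts[OF adm \<open>e \<in> E\<close>, of "Suc M"] Dsh_bounds[of e M] that by (simp add: divide_inverse)
  qed
  have l2: "(\<lambda>M. (SUP e\<in>E. e (Suc M)) + inverse (real (Suc M))) \<longlonglongrightarrow> 0 + 0"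
    by (intro tendsto_intros LIMSEQ_Suc[OF lim] LIMSEQ_inverse_real_of_nat)
  have ev1: "eventually (\<lambda>M. 0 \<le> (SUP e\<in>E. Dsh e M)) sequentially"
    unfolding eventually_sequentially using lo by blast
  have ev2: "eventually (\<lambda>M. (SUP e\<in>E. Dsh e M) \<le> (SUP e\<in>E. e (Suc M)) + inverse (real (Suc M))) sequentially"
    unfolding eventually_sequentially using hi by blast
  have "(\<lambda>M. SUP e\<in>E. Dsh e M) \<longlonglongrightarrow> 0"
    by (rule tendsto_sandwich[OF ev1 ev2 tendsto_const]) (use l2 in simp)
  then show ?thesis by (simp add: eq)
qed

locale SS =
  fixes A :: "real set" and \<psi> :: "real \<Rightarrow> complex" and a0 :: real
  assumes oA: "open A" and iA: "is_interval A"
    and cont: "continuous_on A \<psi>" and a0: "a0 \<in> A"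
begin

lemma intv: "u \<in> A \<Longrightarrow> v \<in> A \<Longrightarrow> u \<le> x \<Longrightarrow> x \<le> v \<Longrightarrow> x \<in> A"
  using iA unfolding is_interval_1 by blast

definition "Psi a = interval_lebesgue_integral lborel (ereal a0) (ereal a) \<psi>"

lemma Psi_deriv:
  assumes x: "x \<in> A"
  shows "(Psi has_vector_derivative \<psi> x) (at x)"
proof -
  obtain e where e: "e > 0" "ball x e \<subseteq> A" using oA x open_contains_ball by blast
  define lo where "lo = min a0 (x - e/2)"
  define hi where "hi = max a0 (x + e/2)"
  have "x - e/2 \<in> ball x e" "x + e/2 \<in> ball x e" using e by (simp_all add: dist_real_def)
  then have xe: "x - e/2 \<in> A" "x + e/2 \<in> A" using e by blast+
  have lohi: "lo \<in> A" "hi \<in> A" unfolding lo_def hi_def min_def max_def using xe a0 by simp_all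
  have sub: "{lo..hi} \<subseteq> A"
  proof
    fix y assume "y \<in> {lo..hi}"
    then show "y \<in> A" using iA lohi unfolding is_interval_1 by (meson atLeastAtMost_iff)
  qed
  have o: "lo \<le> a0" "a0 \<le> hi" "lo \<le> x" "x \<le> hi" "lo < x" "x < hi"
    using e by (simp_all add: lo_def hi_def)
  have "((\<lambda>u. LBINT y=a0..u. \<psi> y) has_vector_derivative \<psi> x) (at x within {lo..hi})"
    by (rule interval_integral_FTC2[OF o(1,2) continuous_on_subset[OF cont sub] o(3,4)])
  then have "(Psi has_vector_derivative \<psi> x) (at x within {lo<..<hi})"
    unfolding Psi_def by (rule has_vector_derivative_within_subset) auto
  moreover have "x \<in> {lo<..<hi}" using o(5,6) by simp
  ultimately show ?thesis
    using has_vector_derivative_within_open[of x "{lo<..<hi}"] open_greaterThanLessThan by blast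
qed

lemma Psi_cont: "continuous_on A Psi"
proof (rule continuous_at_imp_continuous_on, rule ballI)
  fix x assume "x \<in> A"
  show "isCont Psi x" by (rule has_vector_derivative_continuous[OF Psi_deriv[OF \<open>x \<in> A\<close>]])
qed

lemma pointwise:
  fixes eps d :: "nat \<Rightarrow> real" and M :: nat and t a' B :: real
  assumes M: "1 \<le> M" and e0: "0 \<le> eps (Suc M)" and e1: "eps (Suc M) < 1"
    and dM: "d M = eps (Suc M) + (1 - eps (Suc M)) / real (Suc M)"
    and A1: "a' - 1 \<in> A" "a' + 1 \<in> A"
    and B: "\<And>\<tau>. \<tau> \<in> {0..1} \<Longrightarrow>
      norm (SN d \<psi> M (t, a' + \<tau> * (2 * (1 - eps (Suc M)) / real (Suc M))) - \<psi> (t + a')) \<le> B"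
  shows "norm (of_real (real (Suc M) / 2) * (\<Sum>\<nu>=0..M. of_real (bern M t \<nu>) *
            (Psi (a' + hseq eps (Suc M) \<nu>) - Psi (a' + hseq eps (Suc M) (Suc \<nu>)))) - \<psi> (t + a'))
         \<le> B + eps (Suc M) * norm (\<psi> (t + a'))"
proof -
  define N where "N = Suc M"
  define e where "e = eps N"
  define L where "L = 2 * (1 - e) / real N"
  have N1: "1 \<le> N" and Npos: "real N > 0" by (simp_all add: N_def)
  have e0': "0 \<le> e" and e1': "e < 1" using e0 e1 by (simp_all add: e_def N_def)
  have L0: "0 \<le> L" using e1' Npos by (simp add: L_def)
  have NL: "real N / 2 * L = 1 - e" using Npos by (simp add: L_def)
  have hstep: "hseq eps N (Suc \<nu>) + L = hseq eps N \<nu>" for \<nu>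
    using hseq_step[OF N1, of eps \<nu>] by (simp add: L_def e_def)
  have hsh: "hseq d M \<nu> = hseq eps N (Suc \<nu>)" for \<nu>
    using hseq_shift[of M d eps \<nu>, OF M dM] by (simp add: N_def)
  have sub: "{a' - 1 .. a' + 1} \<subseteq> A"
  proof
    fix y assume "y \<in> {a' - 1 .. a' + 1}"
    then show "y \<in> A" using iA A1 unfolding is_interval_1 by (meson atLeastAtMost_iff)
  qed
  have h_in: "a' + hseq eps N (Suc \<nu>) + \<tau> * L \<in> A" if "\<nu> \<le> M" "\<tau> \<in> {0..1}" for \<nu> \<tau>
  proof -
    have r1: "-1 \<le> hseq eps N (Suc \<nu>)"
      using hseq_range[of N eps "Suc \<nu>"] N1 e0' e1' that by (simp add: e_def N_def)
    have r2: "hseq eps N \<nu> \<le> 1"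
      using hseq_range[of N eps \<nu>] N1 e0' e1' that by (simp add: e_def N_def)
    have "0 \<le> \<tau> * L" "\<tau> * L \<le> L" using that L0 by (auto simp: mult_left_le_one_le)
    then have "a' + hseq eps N (Suc \<nu>) + \<tau> * L \<in> {a' - 1 .. a' + 1}"
      using r1 r2 hstep[of \<nu>] by simp
    then show ?thesis using sub by blast
  qed
  define W where "W \<tau> = (\<Sum>\<nu>=0..M. of_real (bern M t \<nu>) * Psi (a' + hseq eps N (Suc \<nu>) + \<tau> * L))
      - of_real (\<tau> * L) * \<psi> (t + a')" for \<tau>
  have Wd: "(W has_vector_derivative (of_real L * (SN d \<psi> M (t, a' + \<tau> * L) - \<psi> (t + a')))) (at \<tau> within {0..1})"
    if \<tau>: "\<tau> \<in> {0..1}" for \<tau>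
  proof -
    have trm: "((\<lambda>\<tau>. Psi (a' + hseq eps N (Suc \<nu>) + \<tau> * L)) has_vector_derivative
        (L *\<^sub>R \<psi> (a' + hseq eps N (Suc \<nu>) + \<tau> * L))) (at \<tau>)" if "\<nu> \<in> {0..M}" for \<nu>
    proof -
      have f: "((\<lambda>\<tau>. a' + hseq eps N (Suc \<nu>) + \<tau> * L) has_vector_derivative L) (at \<tau>)"
        by (auto intro!: derivative_eq_intros simp: has_real_derivative_iff_has_vector_derivative[symmetric])
      have g: "(Psi has_vector_derivative \<psi> (a' + hseq eps N (Suc \<nu>) + \<tau> * L)) (at (a' + hseq eps N (Suc \<nu>) + \<tau> * L))"
        using Psi_deriv h_in[of \<nu> \<tau>] that \<tau> by simp
      show ?thesis using vector_diff_chain_at[OF f g] by (simp add: o_def)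
    qed
    have D: "(W has_vector_derivative
        ((\<Sum>\<nu>=0..M. of_real (bern M t \<nu>) * (L *\<^sub>R \<psi> (a' + hseq eps N (Suc \<nu>) + \<tau> * L))) - of_real L * \<psi> (t + a')))
        (at \<tau>)"
    proof -
      have s1: "((\<lambda>\<tau>. \<Sum>\<nu>=0..M. of_real (bern M t \<nu>) * Psi (a' + hseq eps N (Suc \<nu>) + \<tau> * L)) has_vector_derivative
          (\<Sum>\<nu>=0..M. of_real (bern M t \<nu>) * (L *\<^sub>R \<psi> (a' + hseq eps N (Suc \<nu>) + \<tau> * L)))) (at \<tau>)"
        by (intro has_vector_derivative_sum has_vector_derivative_mult_right trm)
      have l: "((\<lambda>\<tau>. \<tau> * L) has_real_derivative L) (at \<tau>)"
        by (auto intro!: derivative_eq_intros)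
      have s2: "((\<lambda>\<tau>. of_real (\<tau> * L) * \<psi> (t + a')) has_vector_derivative (of_real L * \<psi> (t + a'))) (at \<tau>)"
        by (rule has_vector_derivative_mult_left[OF has_vector_derivative_of_real[OF l]])
      show ?thesis unfolding W_def by (rule has_vector_derivative_diff[OF s1 s2])
    qed
    have "(\<Sum>\<nu>=0..M. of_real (bern M t \<nu>) * (L *\<^sub>R \<psi> (a' + hseq eps N (Suc \<nu>) + \<tau> * L))) - of_real L * \<psi> (t + a')
        = of_real L * (SN d \<psi> M (t, a' + \<tau> * L) - \<psi> (t + a'))"
      unfolding SN_bern by (simp add: hsh scaleR_conv_of_real sum_distrib_left algebra_simps)
    then show ?thesis using D has_vector_derivative_at_within by metis
  qed
  have Wb: "norm (of_real L * (SN d \<psi> M (t, a' + \<tau> * L) - \<psi> (t + a'))) \<le> L * B" if "\<tau> \<in> {0..1}" for \<tau>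
  proof -
    have "norm (of_real L * (SN d \<psi> M (t, a' + \<tau> * L) - \<psi> (t + a'))) = L * norm (SN d \<psi> M (t, a' + \<tau> * L) - \<psi> (t + a'))"
      using L0 by (simp add: norm_mult)
    also have "\<dots> \<le> L * B" using B[OF that] L0 by (intro mult_left_mono) (simp_all add: L_def e_def N_def)
    finally show ?thesis .
  qed
  have W10: "norm (W 1 - W 0) \<le> L * B * \<bar>1 - 0\<bar>"
    by (rule mvt_vec[OF convex_real_interval(5) Wd Wb]) auto
  have Tg: "of_real (real N / 2) * S - \<psi> (t + a') = of_real (real N / 2) * (S - of_real L * \<psi> (t + a')) - of_real e * \<psi> (t + a')" for S :: complex
  proof -
    have "of_real (real N / 2) * (S - of_real L * \<psi> (t + a')) - of_real e * \<psi> (t + a')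
        = of_real (real N / 2) * S - (of_real (real N / 2 * L) + of_real e) * \<psi> (t + a')"
      by (simp add: right_diff_distrib distrib_right mult.assoc)
    also have "\<dots> = of_real (real N / 2) * S - \<psi> (t + a')"
      unfolding NL by (simp add: of_real_diff)
    finally show ?thesis by simp
  qed
  have B0: "0 \<le> B" by (rule order_trans[OF norm_ge_zero B[of 0]]) simp
  have "W 1 - W 0 = (\<Sum>\<nu>=0..M. of_real (bern M t \<nu>) *
            (Psi (a' + hseq eps N \<nu>) - Psi (a' + hseq eps N (Suc \<nu>)))) - of_real L * \<psi> (t + a')"
  proof -
    have "W 1 = (\<Sum>\<nu>=0..M. of_real (bern M t \<nu>) * Psi (a' + hseq eps N \<nu>)) - of_real L * \<psi> (t + a')"
      unfolding W_def by (simp add: add.assoc hstep)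
    moreover have "W 0 = (\<Sum>\<nu>=0..M. of_real (bern M t \<nu>) * Psi (a' + hseq eps N (Suc \<nu>)))"
      unfolding W_def by simp
    ultimately show ?thesis by (simp add: right_diff_distrib sum_subtractf)
  qed
  then have "of_real (real N / 2) * (\<Sum>\<nu>=0..M. of_real (bern M t \<nu>) *
            (Psi (a' + hseq eps N \<nu>) - Psi (a' + hseq eps N (Suc \<nu>)))) - \<psi> (t + a')
      = of_real (real N / 2) * (W 1 - W 0) - of_real e * \<psi> (t + a')"
    using Tg by simp
  also have "norm \<dots> \<le> real N / 2 * (L * B) + e * norm (\<psi> (t + a'))"
    using W10 e0' Npos
  proof -
    have a: "norm (of_real (real N / 2) * (W 1 - W 0)) \<le> real N / 2 * (L * B)"
      using W10 Npos by (simp add: norm_mult)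
    have b: "norm (of_real e * \<psi> (t + a')) = e * norm (\<psi> (t + a'))"
      using e0' by (simp add: norm_mult)
    show ?thesis using norm_triangle_ineq4[of "of_real (real N / 2) * (W 1 - W 0)" "of_real e * \<psi> (t + a')"] a b
      by linarith
  qed
  also have "\<dots> = (1 - e) * B + e * norm (\<psi> (t + a'))" using NL by (simp add: mult.assoc[symmetric])
  also have "\<dots> \<le> B + e * norm (\<psi> (t + a'))" using B0 e0' by (simp add: algebra_simps)
  finally show ?thesis by (simp add: N_def e_def)
qed

lemma sum_delta0: "(\<Sum>\<nu>=0..(M::nat). complex_of_real (if \<nu> = 0 then 1 else 0) * g \<nu>) = g 0"
  by (induct M) auto

lemma bern_one: "bern N 1 \<nu> = (if \<nu> = 0 then 1 else 0)"
  unfolding bern_def by simp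

lemma outer:
  fixes eps d :: "nat \<Rightarrow> real" and M :: nat and a a' B P :: real
  assumes M: "1 \<le> M" and e0: "0 \<le> eps (Suc M)" and e1: "eps (Suc M) < 1"
    and dM: "d M = eps (Suc M) + (1 - eps (Suc M)) / real (Suc M)"
    and A1: "a' - 1 \<in> A" "a' + 1 \<in> A" "a + a' \<in> A"
    and Bnd: "\<And>t \<tau>. t \<in> {min 1 a .. max 1 a} \<Longrightarrow> \<tau> \<in> {0..1} \<Longrightarrow>
      norm (SN d \<psi> M (t, a' + \<tau> * (2 * (1 - eps (Suc M)) / real (Suc M))) - \<psi> (t + a')) \<le> B"
    and Pb: "\<And>t. t \<in> {min 1 a .. max 1 a} \<Longrightarrow> norm (\<psi> (t + a')) \<le> P"
  shows "norm (SN eps Psi (Suc M) (a, a') - Psi (a + a'))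
     \<le> norm (Psi (a' + hseq eps (Suc M) 0) - Psi (a' + 1)) + (B + eps (Suc M) * P) * \<bar>a - 1\<bar>"
proof -
  define f where "f \<nu> = Psi (a' + hseq eps (Suc M) \<nu>)" for \<nu>
  define H where "H t = SN eps Psi (Suc M) (t, a') - Psi (t + a')" for t
  define S where "S = {min 1 a .. max 1 a}"
  have inA: "t + a' \<in> A" if "t \<in> S" for t
  proof -
    have "min (1 + a') (a + a') \<le> t + a'" "t + a' \<le> max (1 + a') (a + a')"
      using that by (auto simp: S_def)
    moreover have "min (1 + a') (a + a') \<in> A" "max (1 + a') (a + a') \<in> A"
      using A1 by (auto simp: min_def max_def add.commute)
    ultimately show ?thesis using iA unfolding is_interval_1 by blast
  qed
  have Hd: "(H has_vector_derivative
      (of_real (real (Suc M) / 2) * (\<Sum>\<nu>=0..M. of_real (bern M t \<nu>) * (f \<nu> - f (Suc \<nu>))) - \<psi> (t + a')))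
      (at t within S)" if "t \<in> S" for t
  proof -
    have d1: "((\<lambda>t. SN eps Psi (Suc M) (t, a')) has_vector_derivative
      (of_real (real (Suc M) / 2) * (\<Sum>\<nu>=0..M. of_real (bern M t \<nu>) * (f \<nu> - f (Suc \<nu>))))) (at t)"
      unfolding SN_bern f_def fst_conv snd_conv by (rule bern_sum_deriv)
    have g: "((\<lambda>t. t + a') has_vector_derivative 1) (at t)"
      by (auto intro!: derivative_eq_intros simp: has_real_derivative_iff_has_vector_derivative[symmetric])
    have d2: "((\<lambda>t. Psi (t + a')) has_vector_derivative \<psi> (t + a')) (at t)"
      using vector_diff_chain_at[OF g Psi_deriv[OF inA[OF that]]] by (simp add: o_def)
    show ?thesis unfolding H_def
      by (rule has_vector_derivative_at_within[OF has_vector_derivative_diff[OF d1 d2]])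
  qed
  have Hb: "norm (of_real (real (Suc M) / 2) * (\<Sum>\<nu>=0..M. of_real (bern M t \<nu>) * (f \<nu> - f (Suc \<nu>))) - \<psi> (t + a'))
      \<le> B + eps (Suc M) * P" if "t \<in> S" for t
  proof -
    have "norm (of_real (real (Suc M) / 2) * (\<Sum>\<nu>=0..M. of_real (bern M t \<nu>) * (f \<nu> - f (Suc \<nu>))) - \<psi> (t + a'))
      \<le> B + eps (Suc M) * norm (\<psi> (t + a'))"
      unfolding f_def
      by (rule pointwise[where M=M and eps=eps and d=d and a'=a' and t=t and B=B, OF M e0 e1 dM A1(1,2) Bnd])
        (use that in \<open>simp_all add: S_def\<close>)
    also have "\<dots> \<le> B + eps (Suc M) * P"
      using Pb[of t] that e0 by (simp add: S_def mult_left_mono)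
    finally show ?thesis .
  qed
  have "norm (H a - H 1) \<le> (B + eps (Suc M) * P) * \<bar>a - 1\<bar>"
    by (rule mvt_vec[OF _ Hd Hb]) (auto simp: S_def)
  moreover have "H 1 = Psi (a' + hseq eps (Suc M) 0) - Psi (a' + 1)"
    unfolding H_def SN_bern by (simp add: bern_one add.commute sum_delta0)
  ultimately show ?thesis
    using norm_triangle_ineq2[of "H a" "H 1"] unfolding H_def by simp
qed

lemma core:
  assumes unif: "\<forall>E. (\<forall>eps\<in>E. admissible_seq eps) \<and> (\<lambda>N. SUP eps\<in>E. eps N) \<longlonglongrightarrow> 0 \<longrightarrow>
        (\<forall>K. compact K \<and> K \<subseteq> AA A \<longrightarrow>
           uniform_limit (E \<times> K) (\<lambda>N q. SN (fst q) \<psi> N (snd q))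
              (\<lambda>q. \<psi> (fst (snd q) + snd (snd q))) sequentially)"
    and adm: "\<forall>eps\<in>E. admissible_seq eps" and Elim: "(\<lambda>N. SUP eps\<in>E. eps N) \<longlonglongrightarrow> 0"
    and Kc: "compact K" and KA: "K \<subseteq> AA A"
  shows "uniform_limit (E \<times> K) (\<lambda>N q. SN (fst q) Psi N (snd q))
              (\<lambda>q. Psi (fst (snd q) + snd (snd q))) sequentially"
proof (cases "E = {}")
  case True then show ?thesis by (simp add: uniform_limit_iff)
next
  case E0: False
  define Sp where "Sp N = (SUP e\<in>E. e N)" for N
  have Splim: "Sp \<longlonglongrightarrow> 0" using Elim by (simp add: Sp_def[abs_def])
  have SpE: "0 \<le> eps N \<and> eps N < 1 \<and> eps N \<le> Sp N" if "eps \<in> E" "1 \<le> N" for eps N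
    using Sup_facts[OF adm that] by (simp add: Sp_def)
  have Sp0: "0 \<le> Sp N" if "1 \<le> N" for N
  proof -
    obtain e0 where "e0 \<in> E" using E0 by blast
    then show ?thesis using SpE[of e0 N] that by linarith
  qed
  define E' where "E' = Dsh ` E"
  have E'adm: "\<forall>d\<in>E'. admissible_seq d" using adm Dsh_adm by (auto simp: E'_def)
  have E'lim: "(\<lambda>M. SUP d\<in>E'. d M) \<longlonglongrightarrow> 0" unfolding E'_def by (rule Dsh_sup[OF E0 adm Elim])
  have AAo: "open (AA A)" by (rule open_AA[OF oA iA])
  note AAi = AA_iff[OF iA]
  have cA: "convex A" by (rule is_interval_convex[OF iA])
  have KAi: "a' - 1 \<in> A" "a' + 1 \<in> A" "a + a' \<in> A" if "(a, a') \<in> K" for a a'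
    using KA that AAi[of "(a, a')"] by auto
  define K2 where "K2 = (\<lambda>z. ((1 - snd z) + snd z * fst (fst z), snd (fst z))) ` (K \<times> {0..(1::real)})"
  have K2c: "compact K2" unfolding K2_def
    by (intro compact_continuous_image compact_Times Kc compact_Icc continuous_intros)
  have K2s: "K2 \<subseteq> AA A"
  proof
    fix p assume "p \<in> K2"
    then obtain a a' u where z: "(a, a') \<in> K" "u \<in> {0..1}" and p: "p = ((1 - u) + u * a, a')"
      unfolding K2_def by auto
    have "(1 - u) *\<^sub>R (1 + a') + u *\<^sub>R (a + a') \<in> A"
      using z KAi[OF z(1)] by (intro convexD[OF cA]) (auto simp: add.commute)
    then show "p \<in> AA A" unfolding p AAi using KAi[OF z(1)] by (simp add: algebra_simps)
  qed
  have K2m: "(t, a') \<in> K2" if "(a, a') \<in> K" "t \<in> {min 1 a .. max 1 a}" for a a' t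
  proof -
    have "t \<in> closed_segment 1 a" using that(2) by (auto simp: closed_segment_eq_real_ivl)
    then obtain u where u: "0 \<le> u" "u \<le> 1" "t = (1 - u) * 1 + u * a"
      unfolding closed_segment_def by auto
    show ?thesis unfolding K2_def
      by (rule image_eqI[where x="((a, a'), u)"]) (use u that(1) in auto)
  qed
  obtain r where r: "r > 0" "(\<Union>x\<in>K2. ball x r) \<subseteq> AA A"
    using compact_subset_open_imp_ball_epsilon_subset[OF K2c AAo K2s] by blast
  define \<beta> where "\<beta> = r / 2"
  have \<beta>: "0 < \<beta>" "\<beta> < r" using r by (auto simp: \<beta>_def)
  define K3 where "K3 = (\<lambda>z. (fst (fst z), snd (fst z) + snd z)) ` (K2 \<times> {0..\<beta>})"
  have K3c: "compact K3" unfolding K3_def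
    by (intro compact_continuous_image compact_Times K2c compact_Icc continuous_intros)
  have K3m: "(t, s + \<tau>) \<in> K3" if "(t, s) \<in> K2" "0 \<le> \<tau>" "\<tau> \<le> \<beta>" for t s \<tau>
    unfolding K3_def by (rule image_eqI[where x="((t, s), \<tau>)"]) (use that in auto)
  have K3s: "K3 \<subseteq> AA A"
  proof
    fix p assume "p \<in> K3"
    then obtain t s \<tau> where z: "(t, s) \<in> K2" "\<tau> \<in> {0..\<beta>}" and p: "p = (t, s + \<tau>)"
      unfolding K3_def by auto
    have "dist (t, s) (t, s + \<tau>) = \<tau>" using z(2) by (simp add: dist_Pair_Pair dist_real_def)
    then have "p \<in> ball (t, s) r" using z(2) \<beta> by (simp add: p)
    then have "p \<in> (\<Union>x\<in>K2. ball x r)" using z(1) by (rule UN_I[rotated])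
    then show "p \<in> AA A" using r(2) by (rule subsetD[rotated])
  qed
  define P3 where "P3 = (\<lambda>z. fst z + snd z) ` K3"
  have P3c: "compact P3" unfolding P3_def
    by (intro compact_continuous_image K3c continuous_intros)
  have P3s: "P3 \<subseteq> A" using K3s AAi unfolding P3_def by auto
  have P3m: "t + s \<in> P3" if "(t, s) \<in> K3" for t s
    unfolding P3_def by (rule image_eqI[where x="(t, s)"]) (use that in auto)
  obtain Pm0 where Pm0: "\<forall>x\<in>\<psi> ` P3. norm x \<le> Pm0"
    using compact_imp_bounded[OF compact_continuous_image[OF continuous_on_subset[OF cont P3s] P3c]]
    unfolding bounded_iff by blast
  define Pm where "Pm = max 0 Pm0"
  have Pm: "0 \<le> Pm" "\<And>x. x \<in> P3 \<Longrightarrow> norm (\<psi> x) \<le> Pm" using Pm0 by (auto simp: Pm_def)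
  have ucp: "uniformly_continuous_on P3 \<psi>"
    by (rule compact_uniformly_continuous[OF continuous_on_subset[OF cont P3s] P3c])
  define Q where "Q = (\<lambda>z. snd (fst z) + snd z) ` (K \<times> {-1..(1::real)})"
  have Qc: "compact Q" unfolding Q_def
    by (intro compact_continuous_image compact_Times Kc compact_Icc continuous_intros)
  have Qm: "a' + s \<in> Q" if "(a, a') \<in> K" "s \<in> {-1..1}" for a a' s
    unfolding Q_def by (rule image_eqI[where x="((a, a'), s)"]) (use that in auto)
  have Qs: "Q \<subseteq> A"
  proof
    fix x assume "x \<in> Q"
    then obtain a a' s where z: "(a, a') \<in> K" "s \<in> {-1..1}" and x: "x = a' + s"
      unfolding Q_def by auto
    have "a' - 1 \<le> x" "x \<le> a' + 1" using z(2) by (auto simp: x)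
    then show "x \<in> A" by (rule intv[OF KAi(1,2)[OF z(1)]])
  qed
  have ucP: "uniformly_continuous_on Q Psi"
    by (rule compact_uniformly_continuous[OF continuous_on_subset[OF Psi_cont Qs] Qc])
  obtain b0 where b0: "\<forall>x\<in>K. norm x \<le> b0"
    using compact_imp_bounded[OF Kc] unfolding bounded_iff by blast
  define R where "R = max 0 b0 + 1"
  have R: "0 \<le> R" "\<And>a a'. (a, a') \<in> K \<Longrightarrow> \<bar>a - 1\<bar> \<le> R"
  proof -
    show "0 \<le> R" by (simp add: R_def)
    fix a a' assume "(a, a') \<in> K"
    then have "norm (a, a') \<le> b0" using b0 by blast
    moreover have "\<bar>a\<bar> \<le> norm (a, a')" using norm_fst_le[of a a'] by simp
    ultimately show "\<bar>a - 1\<bar> \<le> R" by (simp add: R_def)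
  qed
  show ?thesis unfolding uniform_limit_iff
  proof (intro allI impI)
    fix \<epsilon> :: real assume \<epsilon>: "\<epsilon> > 0"
    define \<eta> where "\<eta> = \<epsilon> / (4 * (R + 1))"
    have \<eta>: "\<eta> > 0" using \<epsilon> R by (simp add: \<eta>_def)
    have UL: "uniform_limit (E' \<times> K3) (\<lambda>N q. SN (fst q) \<psi> N (snd q))
              (\<lambda>q. \<psi> (fst (snd q) + snd (snd q))) sequentially"
      using unif E'adm E'lim K3c K3s by blast
    have ev1: "\<forall>\<^sub>F N in sequentially. \<forall>d\<in>E'. \<forall>z\<in>K3. dist (SN d \<psi> (N - 1) z) (\<psi> (fst z + snd z)) < \<eta>"
    proof -
      have "\<forall>\<^sub>F M in sequentially. \<forall>x\<in>E' \<times> K3. dist (SN (fst x) \<psi> M (snd x)) (\<psi> (fst (snd x) + snd (snd x))) < \<eta>"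
        by (rule uniform_limitD[OF UL \<eta>])
      then have "\<forall>\<^sub>F M in sequentially. \<forall>d\<in>E'. \<forall>z\<in>K3. dist (SN d \<psi> (Suc M - 1) z) (\<psi> (fst z + snd z)) < \<eta>"
        by (rule eventually_mono) auto
      then show ?thesis by (rule eventually_sequentially_Suc[THEN iffD1])
    qed
    obtain \<rho> where \<rho>: "\<rho> > 0" "\<And>x x'. x \<in> P3 \<Longrightarrow> x' \<in> P3 \<Longrightarrow> dist x' x < \<rho> \<Longrightarrow> dist (\<psi> x') (\<psi> x) < \<eta>"
      using ucp \<eta> unfolding uniformly_continuous_on_def by metis
    have \<epsilon>4: "\<epsilon> / 4 > 0" using \<epsilon> by simp
    obtain \<rho>2 where \<rho>2: "\<rho>2 > 0" "\<And>x x'. x \<in> Q \<Longrightarrow> x' \<in> Q \<Longrightarrow> dist x' x < \<rho>2 \<Longrightarrow> dist (Psi x') (Psi x) < \<epsilon> / 4"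
      using ucP \<epsilon>4 unfolding uniformly_continuous_on_def by metis
    have ev2: "\<forall>\<^sub>F N in sequentially. 2 / real N < min \<rho> \<beta>"
      using order_tendstoD(2)[OF lim_const_over_n[of "2::real"], of "min \<rho> \<beta>"] \<rho> \<beta> by simp
    have ev4: "\<forall>\<^sub>F N in sequentially. Sp N < \<eta> / (Pm + 1)"
      using order_tendstoD(2)[OF Splim, of "\<eta> / (Pm + 1)"] \<eta> Pm by simp
    have ev5: "\<forall>\<^sub>F N in sequentially. Sp N < \<rho>2 / 2"
      using order_tendstoD(2)[OF Splim, of "\<rho>2 / 2"] \<rho>2 by simp
    have ev6: "\<forall>\<^sub>F N in sequentially. 2 \<le> N"
      by (rule eventually_ge_at_top)
    from ev1 ev2 ev4 ev5 ev6
    show "\<forall>\<^sub>F N in sequentially. \<forall>x\<in>E \<times> K. dist (SN (fst x) Psi N (snd x)) (Psi (fst (snd x) + snd (snd x))) < \<epsilon>"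
    proof eventually_elim
      case (elim N)
      then obtain M where NM: "N = Suc M" and M1: "1 \<le> M" by (intro that[of "N - 1"]) auto
      show ?case
      proof
        fix x assume "x \<in> E \<times> K"
        then obtain eps a a' where x: "x = (eps, (a, a'))" and eE: "eps \<in> E" and aK: "(a, a') \<in> K"
          by auto
        have eN: "0 \<le> eps N" "eps N < 1" "eps N \<le> Sp N" using SpE[OF eE] NM by auto
        define L where "L = 2 * (1 - eps (Suc M)) / real (Suc M)"
        have L: "0 \<le> L" "L \<le> 2 / real N" using eN by (auto simp: L_def NM divide_right_mono)
        have dE: "Dsh eps \<in> E'" using eE by (simp add: E'_def)
        have Bnd: "norm (SN (Dsh eps) \<psi> M (t, a' + \<tau> * L) - \<psi> (t + a')) \<le> 2 * \<eta>"
          if t: "t \<in> {min 1 a .. max 1 a}" and \<tau>: "\<tau> \<in> {0..1}" for t \<tau>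
        proof -
          have tK2: "(t, a') \<in> K2" by (rule K2m[OF aK t])
          have tl: "0 \<le> \<tau> * L" "\<tau> * L \<le> L" using \<tau> L by (auto simp: mult_left_le_one_le)
          have z: "(t, a' + \<tau> * L) \<in> K3" using K3m[OF tK2] tl L elim(2) by auto
          have z0: "(t, a' + 0) \<in> K3" using K3m[OF tK2, of 0] \<beta> by simp
          have d1: "dist (SN (Dsh eps) \<psi> M (t, a' + \<tau> * L)) (\<psi> (t + (a' + \<tau> * L))) < \<eta>"
            using elim(1) dE z NM by fastforce
          have d2: "dist (\<psi> (t + (a' + \<tau> * L))) (\<psi> (t + a')) < \<eta>"
            using \<rho>(2)[OF P3m[OF z0[simplified]] P3m[OF z]] tl L elim(2)
            by (simp add: dist_real_def)
          show ?thesis using d1 d2 dist_triangle[of "SN (Dsh eps) \<psi> M (t, a' + \<tau> * L)" "\<psi> (t + a')" "\<psi> (t + (a' + \<tau> * L))"]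
            by (simp add: dist_norm)
        qed
        have Pb: "norm (\<psi> (t + a')) \<le> Pm" if t: "t \<in> {min 1 a .. max 1 a}" for t
        proof -
          have "(t, a' + 0) \<in> K3" using K3m[OF K2m[OF aK t], of 0] \<beta> by simp
          then show ?thesis using Pm(2) P3m by fastforce
        qed
        have eN': "0 \<le> eps (Suc M)" "eps (Suc M) < 1" using eN NM by auto
        have main: "norm (SN eps Psi (Suc M) (a, a') - Psi (a + a'))
           \<le> norm (Psi (a' + hseq eps (Suc M) 0) - Psi (a' + 1)) + (2 * \<eta> + eps (Suc M) * Pm) * \<bar>a - 1\<bar>"
          using outer[where M=M and eps=eps and d="Dsh eps" and a=a and a'=a' and B="2*\<eta>" and P=Pm,
            OF M1 eN'(1,2) Dsh_def KAi[OF aK] Bnd[unfolded L_def] Pb] by simp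
        have h0: "hseq eps (Suc M) 0 = 1 - 2 * eps (Suc M)" by (simp add: hseq_def)
        have q1: "norm (Psi (a' + hseq eps (Suc M) 0) - Psi (a' + 1)) < \<epsilon> / 4"
        proof -
          have "a' + (1 - 2 * eps (Suc M)) \<in> Q" using eN NM by (intro Qm[OF aK]) auto
          moreover have "a' + 1 \<in> Q" by (intro Qm[OF aK]) auto
          moreover have "dist (a' + (1 - 2 * eps (Suc M))) (a' + 1) < \<rho>2"
            using eN NM elim(4) by (simp add: dist_real_def)
          ultimately show ?thesis using \<rho>2(2) h0 by (simp add: dist_norm)
        qed
        have q2: "eps (Suc M) * Pm \<le> \<eta>"
        proof -
          have "eps (Suc M) * Pm \<le> Sp N * (Pm + 1)" using eN NM Pm(1) by (intro mult_mono) auto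
          also have "\<dots> \<le> \<eta>" using elim(3) Pm(1) by (simp add: pos_less_divide_eq less_imp_le)
          finally show ?thesis .
        qed
        have q3: "(2 * \<eta> + eps (Suc M) * Pm) * \<bar>a - 1\<bar> \<le> 3 * \<eta> * R"
          using q2 R(2)[OF aK] \<eta> R(1) by (intro mult_mono) auto
        have q4: "3 * \<eta> * R < 3 * \<epsilon> / 4"
          using R(1) \<epsilon> by (simp add: \<eta>_def field_simps)
        show "dist (SN (fst x) Psi N (snd x)) (Psi (fst (snd x) + snd (snd x))) < \<epsilon>"
        proof -
          have "norm (SN eps Psi (Suc M) (a, a') - Psi (a + a')) < \<epsilon>" using main q1 q3 q4 by linarith
          then show ?thesis by (simp add: x NM dist_norm)
        qed
      qed
    qed
  qed
qed

end

theorem mainTheorem8: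
  fixes A :: "real set" and \<psi> :: "real \<Rightarrow> complex" and a0 :: real
  assumes "open_interval_gt2 A"
    and "regular_supershift A \<psi>"
    and "a0 \<in> A"
  shows "regular_supershift A
           (\<lambda>a. interval_lebesgue_integral lborel (ereal a0) (ereal a) \<psi>)"
proof -
  have oA: "open A" and iA: "is_interval A" using assms(1) by (auto simp: open_interval_gt2_def)
  have cont: "continuous_on A \<psi>" using assms(2) by (simp add: regular_supershift_def)
  have unif: "\<forall>E. (\<forall>eps\<in>E. admissible_seq eps) \<and> (\<lambda>N. SUP eps\<in>E. eps N) \<longlonglongrightarrow> 0 \<longrightarrow>
        (\<forall>K. compact K \<and> K \<subseteq> AA A \<longrightarrow>
           uniform_limit (E \<times> K) (\<lambda>N q. SN (fst q) \<psi> N (snd q))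
              (\<lambda>q. \<psi> (fst (snd q) + snd (snd q))) sequentially)"
    using assms(2) unfolding regular_supershift_def by blast
  interpret SS A \<psi> a0 using oA iA cont assms(3) by unfold_locales
  have PsiE: "(\<lambda>a. interval_lebesgue_integral lborel (ereal a0) (ereal a) \<psi>) = Psi"
    by (rule ext) (simp add: Psi_def)
  show ?thesis unfolding PsiE regular_supershift_def
  proof (intro conjI allI impI)
    show "continuous_on A Psi" by (rule Psi_cont)
  next
    fix eps :: "nat \<Rightarrow> real" and K :: "(real \<times> real) set"
    assume adm: "admissible_seq eps" and K: "compact K \<and> K \<subseteq> AA A"
    have lim: "(\<lambda>N. SUP e\<in>{eps}. e N) \<longlonglongrightarrow> 0" using adm by (simp add: admissible_seq_def)
    have UL: "uniform_limit ({eps} \<times> K) (\<lambda>N q. SN (fst q) Psi N (snd q))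
              (\<lambda>q. Psi (fst (snd q) + snd (snd q))) sequentially"
      by (rule core[OF unif _ lim]) (use adm K in auto)
    show "uniform_limit K (\<lambda>N p. SN eps Psi N p) (\<lambda>p. Psi (fst p + snd p)) sequentially"
      unfolding uniform_limit_iff
    proof (intro allI impI)
      fix e :: real assume "e > 0"
      from uniform_limitD[OF UL this]
      show "\<forall>\<^sub>F n in sequentially. \<forall>x\<in>K. dist (SN eps Psi n x) (Psi (fst x + snd x)) < e"
        by (rule eventually_mono) auto
    qed
  next
    fix E :: "(nat \<Rightarrow> real) set" and K :: "(real \<times> real) set"
    assume E: "(\<forall>eps\<in>E. admissible_seq eps) \<and> (\<lambda>N. SUP eps\<in>E. eps N) \<longlonglongrightarrow> 0"
      and K: "compact K \<and> K \<subseteq> AA A"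
    show "uniform_limit (E \<times> K) (\<lambda>N q. SN (fst q) Psi N (snd q))
              (\<lambda>q. Psi (fst (snd q) + snd (snd q))) sequentially"
      using core[OF unif] E K by blast
  qed
qed

end
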